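(* Let $a>0$. There exists $k_0=k_0(a)$ such that for all integers $k\ge k_0$, all positive integers $N>e^{ak}$, all $\delta\in(0,1/2)$ and all $x\in[e^{ak^2},N^k]$, \[ \#\mathcal{S}_k(N,\delta,x)\ge\Big(\big(\tfrac12-\delta\big)\big(2^{-1/k}-\tfrac32e^{-a}\big)-(2/3)^k\Big)x^{1/k}. \]
   Context: For $y\in\mathbb{R}$, $\|y\|$ denotes the distance from $y$ to the nearest integer. For positive integers $k,N$ and real $\delta,x\ge0$, $\mathcal{S}_k(N,\delta,x):=\{n\in\{1,\dots,N\} : \|x/n^k\|\ge\delta\}$. *)

theory Defs
  imports Complex_Main
begin

definition dist_nint :: "real \<Rightarrow> real" where
  "dist_nint y = (INF m\<in>(\<int>::real set). \<bar>y - m\<bar>)"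

definition S_set :: "nat \<Rightarrow> nat \<Rightarrow> real \<Rightarrow> real \<Rightarrow> nat set" where
  "S_set k N \<delta> x = {n \<in> {1..N}. dist_nint (x / real n ^ k) \<ge> \<delta>}"

end

theory Submission imports Defs begin

lemma dist_ge:
  fixes m :: int and y \<delta> :: real
  assumes "m + \<delta> \<le> y" "y \<le> m + 1 - \<delta>"
  shows "dist_nint y \<ge> \<delta>"
  unfolding dist_nint_def
proof (rule cINF_greatest)
  show "(\<int>::real set) \<noteq> {}" by auto
next
  fix j :: real assume "j \<in> \<int>"
  then obtain i :: int where j: "j = of_int i" by (auto elim: Ints_cases)
  show "\<delta> \<le> \<bar>y - j\<bar>"
  proof (cases "i \<le> m")
    case True
    then have "real_of_int i \<le> real_of_int m" by simp
    then show ?thesis using assms j by linarith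
  next
    case False
    then have "real_of_int i \<ge> real_of_int m + 1" by simp
    then show ?thesis using assms j by linarith
  qed
qed

lemma count_ge:
  fixes A B :: real
  assumes "0 \<le> A"
  shows "real (card {n::nat. A \<le> real n \<and> real n \<le> B}) \<ge> B - A - 1"
proof (cases "B < 0")
  case True then show ?thesis using assms by simp
next
  case False
  have eq: "{n::nat. A \<le> real n \<and> real n \<le> B} = {nat \<lceil>A\<rceil>..nat \<lfloor>B\<rfloor>}"
  proof (rule set_eqI)
    fix n :: nat
    have "A \<le> real n \<longleftrightarrow> nat \<lceil>A\<rceil> \<le> n" using assms
      by (metis ceiling_le_iff nat_le_iff of_int_of_nat_eq of_nat_le_iff)
    moreover have "real n \<le> B \<longleftrightarrow> n \<le> nat \<lfloor>B\<rfloor>" using False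
      by (metis le_floor_iff le_nat_iff not_less of_int_0_le_iff of_int_of_nat_eq zero_le_floor)
    ultimately show "n \<in> {n::nat. A \<le> real n \<and> real n \<le> B} \<longleftrightarrow> n \<in> {nat \<lceil>A\<rceil>..nat \<lfloor>B\<rfloor>}"
      by auto
  qed
  have "real (card {nat \<lceil>A\<rceil>..nat \<lfloor>B\<rfloor>}) = real (nat \<lfloor>B\<rfloor> + 1 - nat \<lceil>A\<rceil>)" by simp
  also have "\<dots> \<ge> B - A - 1"
  proof -
    have "real_of_int \<lfloor>B\<rfloor> > B - 1" by linarith
    moreover have "real_of_int \<lceil>A\<rceil> < A + 1" by linarith
    moreover have "real (Suc (nat \<lfloor>B\<rfloor>) - nat \<lceil>A\<rceil>) \<ge> real (Suc (nat \<lfloor>B\<rfloor>)) - real (nat \<lceil>A\<rceil>)"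
      by linarith
    moreover have "real (nat \<lfloor>B\<rfloor>) = real_of_int \<lfloor>B\<rfloor>" using False by simp
    moreover have "real (nat \<lceil>A\<rceil>) = real_of_int \<lceil>A\<rceil>" using assms by simp
    ultimately show ?thesis by linarith
  qed
  finally show ?thesis using eq by simp
qed

lemma term_ge:
  fixes m \<delta> r :: real
  assumes "m \<ge> 1" "0 < \<delta>" "\<delta> < 1/2" "r \<le> 0"
  shows "(m+\<delta>) powr r - (m+1-\<delta>) powr r \<ge> (1-2*\<delta>) * ((m+1) powr r - (m+2) powr r)"
proof -
  have der: "\<And>t. t > 0 \<Longrightarrow> DERIV (\<lambda>z. z powr r) t :> r * t powr (r - 1)"
    by (rule has_real_derivative_powr)
  obtain z1 where z1: "m+\<delta> < z1" "z1 < m+1-\<delta>"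
    "(m+1-\<delta>) powr r - (m+\<delta>) powr r = ((m+1-\<delta>) - (m+\<delta>)) * (r * z1 powr (r-1))"
    using MVT2[of "m+\<delta>" "m+1-\<delta>" "\<lambda>z. z powr r" "\<lambda>t. r * t powr (r - 1)"] der assms by force
  obtain z2 where z2: "m+1 < z2" "z2 < m+2"
    "(m+2) powr r - (m+1) powr r = ((m+2) - (m+1)) * (r * z2 powr (r-1))"
    using MVT2[of "m+1" "m+2" "\<lambda>z. z powr r" "\<lambda>t. r * t powr (r - 1)"] der assms by force
  have p: "z2 powr (r-1) \<le> z1 powr (r-1)"
    by (rule powr_mono2') (use assms z1 z2 in auto)
  have q: "-r * z2 powr (r-1) \<le> -r * z1 powr (r-1)"
    using mult_left_mono[OF p, of "-r"] assms by auto
  have "(1-2*\<delta>) * (-r * z2 powr (r-1)) \<le> (1-2*\<delta>) * (-r * z1 powr (r-1))"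
    using mult_left_mono[OF q, of "1-2*\<delta>"] assms by auto
  then show ?thesis using z1(3) z2(3) by (simp add: algebra_simps)
qed

lemma tele:
  fixes \<delta> r :: real
  assumes "0 < \<delta>" "\<delta> < 1/2" "r \<le> 0"
  shows "(\<Sum>m=1..M. (real m+\<delta>) powr r - (real m+1-\<delta>) powr r) \<ge> (1-2*\<delta>) * (2 powr r - (real M+2) powr r)"
proof (induction M)
  case 0 then show ?case by simp
next
  case (Suc M)
  have "(1-2*\<delta>) * (2 powr r - (real (Suc M)+2) powr r) =
     (1-2*\<delta>) * (2 powr r - (real M+2) powr r) + (1-2*\<delta>) * ((real (Suc M)+1) powr r - (real (Suc M)+2) powr r)"
    by (simp add: algebra_simps)
  also have "\<dots> \<le> (\<Sum>m=1..M. (real m+\<delta>) powr r - (real m+1-\<delta>) powr r) + ((real (Suc M)+\<delta>) powr r - (real (Suc M)+1-\<delta>) powr r)"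
    using Suc term_ge[of "real (Suc M)" \<delta> r] assms by (intro add_mono) auto
  finally show ?case by simp
qed


lemma root_pow:
  fixes y :: real assumes "y > 0" "k \<ge> 1"
  shows "(y powr (1 / real k)) ^ k = y"
proof -
  have "(y powr (1 / real k)) ^ k = (y powr (1 / real k)) powr (real k)"
    using assms by (simp add: powr_realpow)
  also have "\<dots> = y" using assms by (simp add: powr_powr)
  finally show ?thesis .
qed

theorem lemma3p6:
  fixes a :: real
  assumes "a > 0"
  shows "\<exists>k0::nat. \<forall>k::nat. \<forall>N::nat. \<forall>\<delta>::real. \<forall>x::real.
           k \<ge> k0 \<longrightarrow> k \<ge> 1 \<longrightarrow> real N > exp (a * real k) \<longrightarrow>
           0 < \<delta> \<longrightarrow> \<delta> < 1/2 \<longrightarrow>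
           exp (a * real k ^ 2) \<le> x \<longrightarrow> x \<le> real N ^ k \<longrightarrow>
           real (card (S_set k N \<delta> x)) \<ge>
             ((1/2 - \<delta>) * (2 powr (-1 / real k) - 3/2 * exp (-a)) - (2/3) ^ k) * x powr (1 / real k)"
proof (intro exI[of _ 1] allI impI)
  fix k N :: nat and \<delta> x :: real
  assume k: "k \<ge> 1" "1 \<le> k" and hN: "real N > exp (a * real k)"
    and d: "0 < \<delta>" "\<delta> < 1/2" and hx: "exp (a * real k ^ 2) \<le> x" "x \<le> real N ^ k"
  have x0: "x > 0" using hx(1) by (meson exp_gt_zero less_le_trans)
  define r where "r = -1 / real k"
  have r0: "r \<le> 0" using k unfolding r_def by simp
  define X where "X = x powr (1 / real k)"
  have X0: "X > 0" using x0 unfolding X_def by simp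
  define Y where "Y = X * (2/3)^k"
  have Y0: "Y > 0" using X0 unfolding Y_def by simp
  define M where "M = nat \<lfloor>Y\<rfloor>"
  have MY: "real M \<le> Y" using Y0 unfolding M_def by linarith
  have MY2: "real M + 2 \<ge> Y" using Y0 unfolding M_def by linarith
  define A where "A = (\<lambda>m::nat. (x / (real m + 1 - \<delta>)) powr (1 / real k))"
  define B where "B = (\<lambda>m::nat. (x / (real m + \<delta>)) powr (1 / real k))"
  define I where "I = (\<lambda>m::nat. {n::nat. A m \<le> real n \<and> real n \<le> B m})"
  have BA: "B m - A m = X * ((real m + \<delta>) powr r - (real m + 1 - \<delta>) powr r)" for m
  proof -
    have "B m = X * (real m + \<delta>) powr r" unfolding B_def X_def r_def using x0 d
      by (simp add: powr_divide powr_minus_divide)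
    moreover have "A m = X * (real m + 1 - \<delta>) powr r" unfolding A_def X_def r_def using x0 d
      by (simp add: powr_divide powr_minus_divide)
    ultimately show ?thesis by (simp add: algebra_simps)
  qed
  have memI: "real m + \<delta> \<le> x / real n ^ k \<and> x / real n ^ k \<le> real m + 1 - \<delta> \<and> n > 0"
    if "n \<in> I m" for n m
  proof -
    have Ap: "A m > 0" unfolding A_def using x0 d by simp
    have n1: "A m \<le> real n" "real n \<le> B m" using that unfolding I_def by auto
    have npos: "real n > 0" using Ap n1 by linarith
    have "real n ^ k \<le> B m ^ k" using n1 npos by (intro power_mono) auto
    also have "B m ^ k = x / (real m + \<delta>)" unfolding B_def using root_pow x0 d k by simp
    finally have h1: "real n ^ k \<le> x / (real m + \<delta>)" .
    have "A m ^ k \<le> real n ^ k" using n1 Ap by (intro power_mono) auto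
    moreover have "A m ^ k = x / (real m + 1 - \<delta>)" unfolding A_def using root_pow x0 d k by simp
    ultimately have h2: "x / (real m + 1 - \<delta>) \<le> real n ^ k" by simp
    have nk: "real n ^ k > 0" using npos by simp
    have "real m + \<delta> \<le> x / real n ^ k" using h1 nk d
      by (simp add: field_simps)
    moreover have "x / real n ^ k \<le> real m + 1 - \<delta>" using h2 nk d
      by (simp add: field_simps)
    ultimately show ?thesis using npos by simp
  qed
  have sub: "I m \<subseteq> S_set k N \<delta> x" if "m \<in> {1..M}" for m
  proof
    fix n assume n: "n \<in> I m"
    note h = memI[OF n]
    have "dist_nint (x / real n ^ k) \<ge> \<delta>"
      using dist_ge[of "int m" \<delta> "x / real n ^ k"] h by simp
    moreover have "n \<le> N"
    proof -
      have "real m \<ge> 1" using that by simp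
      then have "x / real n ^ k \<ge> 1" using h d by linarith
      then have "real n ^ k \<le> x" using h by (simp add: field_simps)
      then have "real n ^ k \<le> real N ^ k" using hx by linarith
      then have "real n \<le> real N" using power_le_imp_le_base k by fastforce
      then show ?thesis by simp
    qed
    ultimately show "n \<in> S_set k N \<delta> x" unfolding S_set_def using h by auto
  qed
  have finS: "finite (S_set k N \<delta> x)" unfolding S_set_def by simp
  have finI: "finite (I m)" if "m \<in> {1..M}" for m using sub[OF that] finS finite_subset by blast
  have disj: "\<forall>i\<in>{1..M}. \<forall>j\<in>{1..M}. i \<noteq> j \<longrightarrow> I i \<inter> I j = {}"
  proof (intro ballI impI)
    fix i j assume "i \<in> {1..M}" "j \<in> {1..M}" "i \<noteq> j"
    show "I i \<inter> I j = {}"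
    proof (rule ccontr)
      assume "I i \<inter> I j \<noteq> {}"
      then obtain n where "n \<in> I i" "n \<in> I j" by auto
      from memI[OF this(1)] memI[OF this(2)] have "real i < real j + 1" "real j < real i + 1"
        using d by linarith+
      then show False using \<open>i \<noteq> j\<close> by linarith
    qed
  qed
  have "real (card (\<Union>(I ` {1..M}))) = (\<Sum>m=1..M. real (card (I m)))"
    using card_UN_disjoint[OF _ _ disj] finI by simp
  also have "\<dots> \<ge> (\<Sum>m=1..M. B m - A m - 1)"
    unfolding I_def by (intro sum_mono count_ge) (simp add: A_def)
  finally have c1: "real (card (\<Union>(I ` {1..M}))) \<ge> (\<Sum>m=1..M. B m - A m - 1)" .
  have "(\<Sum>m=1..M. B m - A m - 1) = X * (\<Sum>m=1..M. (real m + \<delta>) powr r - (real m + 1 - \<delta>) powr r) - real M"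
    by (simp add: BA sum_subtractf sum_distrib_left[symmetric])
  also have "\<dots> \<ge> X * ((1-2*\<delta>) * (2 powr r - (real M+2) powr r)) - real M"
    using tele[OF d r0, of M] X0 by (intro diff_right_mono mult_left_mono) auto
  finally have c2: "real (card (S_set k N \<delta> x)) \<ge> X * ((1-2*\<delta>) * (2 powr r - (real M+2) powr r)) - real M"
    using c1 card_mono[OF finS] sub
    by (smt (verit, ccfv_SIG) UN_least of_nat_le_iff)
  have "(real M + 2) powr r \<le> Y powr r" using powr_mono2'[OF r0 Y0 MY2] .
  also have "Y powr r = X powr r * ((2/3)^k) powr r" unfolding Y_def using X0 by (simp add: powr_mult)
  also have "((2/3::real)^k) powr r = 3/2"
  proof -
    have "((2/3::real)^k) powr r = ((2/3) powr (real k)) powr r" by (simp add: powr_realpow)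
    also have "\<dots> = (2/3) powr (-1)" using k by (simp add: powr_powr r_def)
    finally show ?thesis by (simp add: powr_minus_divide)
  qed
  also have "X powr r \<le> exp (-a)"
  proof -
    have "X powr r = x powr (- 1 / (real k ^ 2))" unfolding X_def r_def using x0
      by (simp add: powr_powr power2_eq_square)
    also have "\<dots> \<le> exp (a * real k ^ 2) powr (- 1 / (real k ^ 2))"
      by (rule powr_mono2') (use hx k in auto)
    also have "\<dots> = exp (-a)" using k by (simp add: powr_def)
    finally show ?thesis .
  qed
  finally have c3: "(real M + 2) powr r \<le> exp (-a) * (3/2)" by simp
  define P where "P = 2 powr r - 3/2 * exp (-a)"
  have c4: "real (card (S_set k N \<delta> x)) \<ge> X * ((1-2*\<delta>) * P) - X * (2/3)^k"
  proof -
    have "X * ((1-2*\<delta>) * P) \<le> X * ((1-2*\<delta>) * (2 powr r - (real M+2) powr r))"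
      unfolding P_def using c3 d X0 by (intro mult_left_mono) auto
    then show ?thesis using c2 MY unfolding Y_def by linarith
  qed
  show "real (card (S_set k N \<delta> x)) \<ge>
             ((1/2 - \<delta>) * (2 powr (-1 / real k) - 3/2 * exp (-a)) - (2/3) ^ k) * x powr (1 / real k)"
  proof (cases "P \<ge> 0")
    case True
    have "(1/2 - \<delta>) * P \<le> (1-2*\<delta>) * P" using True d by (intro mult_right_mono) auto
    then have "X * ((1/2 - \<delta>) * P) \<le> X * ((1-2*\<delta>) * P)" using X0 by (intro mult_left_mono) auto
    moreover have e: "((1/2-\<delta>)*P - (2/3)^k)*X = X*((1/2-\<delta>)*P) - X*(2/3)^k"
      by (simp add: algebra_simps)
    ultimately have "((1/2-\<delta>)*P - (2/3)^k)*X \<le> real (card (S_set k N \<delta> x))"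
      using c4 by linarith
    then show ?thesis unfolding P_def r_def X_def by simp
  next
    case False
    have "(1/2 - \<delta>) * P \<le> 0" using False d by (intro mult_nonneg_nonpos) auto
    moreover have "(0::real) \<le> (2/3) ^ k" by simp
    ultimately have "(1/2 - \<delta>) * P - (2/3) ^ k \<le> 0" by linarith
    then have "((1/2 - \<delta>) * P - (2/3) ^ k) * X \<le> 0"
      using X0 by (intro mult_nonpos_nonneg) auto
    then show ?thesis unfolding P_def r_def X_def by simp
  qed
qed

end
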